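(* Let $d\ge 1$, $0<\mu\le L$, let $A\in\mathbb{R}^{d\times d}$ be symmetric with $\mu I\preceq A\preceq LI$, let $b\in\mathbb{R}^d$, and let $f(x)=\frac12 x^\top Ax+b^\top x$. Let $x_0\in\mathbb{R}^d$ be arbitrary and let $\{x_t\},\{G_t\}$ be generated by Sharpened-BFGS for quadratics (defined in the context), and assume $\nabla f(x_t)\neq 0$ for all $t$ considered. Then for all $t\ge 0$, $$\theta(A,G_t,x_{t+1}-x_t)\le 1-\frac{\mu}{L},$$ and consequently $\lambda_t\le \left(1-\frac{\mu}{L}\right)^t\lambda_0$ for all $t\ge 0$, where $\lambda_t:=\lambda_f(x_t)$.
   Context: For symmetric positive definite $A,G\in\mathbb{R}^{d\times d}$ and $u\in\mathbb{R}^d\setminus\{0\}$, the BFGS operator is $\mathrm{BFGS}(A,G,u):=G-\frac{Guu^\top G}{u^\top Gu}+\frac{Auu^\top A}{u^\top Au}$. The greedy vector is $\bar u(A,G):=\arg\max_{u\in\{e_1,\dots,e_d\}}\frac{u^\top Gu}{u^\top Au}$ (ties broken arbitrarily), where $e_i$ is the $i$-th standard basis vector. Define $\theta(A,G,u):=\left(\frac{u^\top (G-A)A^{-1}(G-A)u}{u^\top GA^{-1}Gu}\right)^{1/2}$. The Newton decrement is $\lambda_f(x):=\sqrt{\nabla f(x)^\top\nabla^2 f(x)^{-1}\nabla f(x)}$. Sharpened-BFGS for quadratics: set $G_0=LI$; for $t=0,1,2,\dots$: $x_{t+1}=x_t-G_t^{-1}\nabla f(x_t)$, $s_t=x_{t+1}-x_t$,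 $\bar G_t=\mathrm{BFGS}(A,G_t,s_t)$, $\bar u=\bar u(A,\bar G_t)$, $G_{t+1}=\mathrm{BFGS}(A,\bar G_t,\bar u)$. *)

theory Defs
  imports "HOL-Analysis.Analysis"
begin

definition outer :: "real^'n \<Rightarrow> real^'n \<Rightarrow> real^'n^'n" where
  "outer x y = (\<chi> i j. x $ i * y $ j)"

definition qf :: "real^'n^'n \<Rightarrow> real^'n \<Rightarrow> real" where
  "qf M u = u \<bullet> (M *v u)"

definition BFGS :: "real^'n^'n \<Rightarrow> real^'n^'n \<Rightarrow> real^'n \<Rightarrow> real^'n^'n" where
  "BFGS A G u = G - (1 / qf G u) *\<^sub>R outer (G *v u) (u v* G)
                  + (1 / qf A u) *\<^sub>R outer (A *v u) (u v* A)"

definition is_greedy :: "real^'n^'n \<Rightarrow> real^'n^'n \<Rightarrow> real^'n \<Rightarrow> bool" where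
  "is_greedy A G u \<longleftrightarrow> (\<exists>i. u = axis i 1) \<and>
     (\<forall>j. qf G (axis j 1) / qf A (axis j 1) \<le> qf G u / qf A u)"

definition theta :: "real^'n^'n \<Rightarrow> real^'n^'n \<Rightarrow> real^'n \<Rightarrow> real" where
  "theta A G u = sqrt (qf ((G - A) ** matrix_inv A ** (G - A)) u
                       / qf (G ** matrix_inv A ** G) u)"

definition quad_f :: "real^'n^'n \<Rightarrow> real^'n \<Rightarrow> real^'n \<Rightarrow> real" where
  "quad_f A b x = (1/2) * (x \<bullet> (A *v x)) + b \<bullet> x"

definition quad_grad :: "real^'n^'n \<Rightarrow> real^'n \<Rightarrow> real^'n \<Rightarrow> real^'n" where
  "quad_grad A b x = A *v x + b"

definition newton_decr :: "real^'n^'n \<Rightarrow> real^'n \<Rightarrow> real^'n \<Rightarrow> real" where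
  "newton_decr A b x = sqrt (qf (matrix_inv A) (quad_grad A b x))"

definition sharpened_bfgs :: "real^'n^'n \<Rightarrow> real^'n \<Rightarrow> real \<Rightarrow>
    (nat \<Rightarrow> real^'n) \<Rightarrow> (nat \<Rightarrow> real^'n^'n) \<Rightarrow> bool" where
  "sharpened_bfgs A b L x G \<longleftrightarrow>
     G 0 = L *\<^sub>R mat 1 \<and>
     (\<forall>t. x (Suc t) = x t - matrix_inv (G t) *v quad_grad A b (x t) \<and>
          (let Gbar = BFGS A (G t) (x (Suc t) - x t)
           in \<exists>u. is_greedy A Gbar u \<and> G (Suc t) = BFGS A Gbar u))"

end

theory Submission
  imports Defs
begin

lemma inv_props:
  fixes M :: "real^'n^'n"
  assumes "invertible M"
  shows "M ** matrix_inv M = mat 1 \<and> matrix_inv M ** M = mat 1"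
  using assms unfolding matrix_inv_def invertible_def by (rule someI_ex)

lemma pd_invertible:
  fixes M :: "real^'n^'n"
  assumes "\<And>v. v \<noteq> 0 \<Longrightarrow> qf M v > 0"
  shows "invertible M"
proof -
  have "\<forall>x. M *v x = 0 \<longrightarrow> x = 0"
  proof (intro allI impI)
    fix x assume "M *v x = 0"
    hence "qf M x = 0" by (simp add: qf_def)
    thus "x = 0" using assms[of x] by (cases "x = 0") auto
  qed
  thus ?thesis using invertible_left_inverse matrix_left_invertible_ker by blast
qed

lemma sym_entry:
  fixes M :: "real^'n^'n"
  assumes "transpose M = M" shows "M $ i $ j = M $ j $ i"
  using assms by (metis transpose_def vec_lambda_beta)

lemma sym_swap:
  fixes M :: "real^'n^'n"
  assumes "transpose M = M"
  shows "u \<bullet> (M *v v) = v \<bullet> (M *v u)"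
proof -
  have "u \<bullet> (M *v v) = (u v* M) \<bullet> v" by (simp add: dot_lmul_matrix)
  also have "u v* M = M *v u" using vector_transpose_matrix[of u M] assms by simp
  finally show ?thesis by (simp add: inner_commute)
qed

lemma vm_sym:
  fixes M :: "real^'n^'n"
  assumes "transpose M = M"
  shows "u v* M = M *v u"
  using vector_transpose_matrix[of u M] assms by simp

lemma outer_mv: "outer x y *v v = (y \<bullet> v) *\<^sub>R (x::real^'n)"
  by (simp add: vec_eq_iff matrix_vector_mult_def outer_def inner_vec_def sum_distrib_left mult_ac)

lemma scaleR_mv: "((c::real) *\<^sub>R (M::real^'n^'m)) *v v = c *\<^sub>R (M *v v)"
  by (simp add: vec_eq_iff matrix_vector_mult_def sum_distrib_left mult_ac)

lemma qf_BFGS: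
  fixes A G :: "real^'n^'n"
  assumes "transpose G = G" "transpose A = A"
  shows "qf (BFGS A G u) v = qf G v - (v \<bullet> (G *v u))^2 / qf G u + (v \<bullet> (A *v u))^2 / qf A u"
  unfolding BFGS_def qf_def
  by (simp add: algebra_simps scaleR_mv outer_mv vm_sym[OF assms(1)] vm_sym[OF assms(2)]
      power2_eq_square inner_commute)

lemma BFGS_sym:
  fixes A G :: "real^'n^'n"
  assumes "transpose G = G" "transpose A = A"
  shows "transpose (BFGS A G u) = BFGS A G u"
  unfolding BFGS_def vm_sym[OF assms(1)] vm_sym[OF assms(2)]
  using sym_entry[OF assms(1)]
  by (simp add: vec_eq_iff transpose_def outer_def mult_ac)

lemma qf_comb:
  fixes M :: "real^'n^'n"
  assumes "transpose M = M"
  shows "qf M (v - t *\<^sub>R u) = qf M v - 2 * t * (v \<bullet> (M *v u)) + t^2 * qf M u"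
  unfolding qf_def using sym_swap[OF assms, of u v]
  by (simp add: algebra_simps matrix_vector_mult_scaleR power2_eq_square)

lemma scal1:
  fixes a b c t :: real assumes "c > 0"
  shows "a - 2 * t * b + t^2 * c \<ge> a - b^2 / c"
proof -
  have "t^2 * c - 2 * t * b + b^2 / c = (t * c - b)^2 / c"
    using assms by (simp add: field_simps power2_eq_square)
  moreover have "(t * c - b)^2 / c \<ge> 0" using assms by simp
  ultimately show ?thesis by linarith
qed

lemma scal2:
  fixes g1 g2 g3 :: real assumes "g3 > 0"
  shows "g1 - 2 * (g2 / g3) * g2 + (g2/g3)^2 * g3 = g1 - g2^2 / g3"
  using assms by (simp add: field_simps power2_eq_square)

lemma BFGS_bounds:
  fixes A G :: "real^'n^'n"
  assumes sG: "transpose G = G" and sA: "transpose A = A" and eta: "\<eta> \<ge> 1"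
    and lo: "\<And>v. qf A v \<le> qf G v" and hi: "\<And>v. qf G v \<le> \<eta> * qf A v"
    and pd: "\<And>v. v \<noteq> 0 \<Longrightarrow> qf A v > 0"
  shows "qf A v \<le> qf (BFGS A G u) v \<and> qf (BFGS A G u) v \<le> \<eta> * qf A v"
proof (cases "u = 0")
  case True
  then show ?thesis using qf_BFGS[OF sG sA, of u v] lo[of v] hi[of v] by simp
next
  case False
  define a where "a = qf A v"
  define b where "b = v \<bullet> (A *v u)"
  define c where "c = qf A u"
  define g1 where "g1 = qf G v"
  define g2 where "g2 = v \<bullet> (G *v u)"
  define g3 where "g3 = qf G u"
  have c0: "c > 0" using pd[OF False] c_def by simp
  have g30: "g3 > 0" using lo[of u] c0 c_def g3_def by simp
  have Q: "qf (BFGS A G u) v = g1 - g2^2/g3 + b^2/c"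
    using qf_BFGS[OF sG sA, of u v] by (simp add: a_def b_def c_def g1_def g2_def g3_def)
  define t where "t = g2 / g3"
  have e1: "qf G (v - t *\<^sub>R u) = g1 - g2^2/g3"
    using qf_comb[OF sG, of v t u] scal2[OF g30, of g1 g2] by (simp add: t_def g1_def g2_def g3_def)
  have e2: "qf A (v - t *\<^sub>R u) = a - 2 * t * b + t^2 * c"
    using qf_comb[OF sA, of v t u] by (simp add: a_def b_def c_def)
  have low: "g1 - g2^2/g3 \<ge> a - b^2/c"
    using e1 e2 lo[of "v - t *\<^sub>R u"] scal1[OF c0, of a b t] by linarith
  define r where "r = b / c"
  have e3: "qf G (v - r *\<^sub>R u) = g1 - 2 * r * g2 + r^2 * g3"
    using qf_comb[OF sG, of v r u] by (simp add: g1_def g2_def g3_def)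
  have e4: "qf A (v - r *\<^sub>R u) = a - b^2/c"
    using qf_comb[OF sA, of v r u] scal2[OF c0, of a b] by (simp add: r_def a_def b_def c_def)
  have up: "g1 - g2^2/g3 \<le> \<eta> * (a - b^2/c)"
    using e3 e4 hi[of "v - r *\<^sub>R u"] scal1[OF g30, of g1 g2 r] by (metis order_trans)
  have bc: "b^2/c \<ge> 0" using c0 by simp
  have "\<eta> * (a - b^2/c) + b^2/c \<le> \<eta> * a"
  proof -
    have "(\<eta> - 1) * (b^2/c) \<ge> 0" using eta bc by (intro mult_nonneg_nonneg) auto
    moreover have "\<eta> * (a - b^2/c) + b^2/c = \<eta> * a - (\<eta> - 1) * (b^2/c)"
      by (simp only: algebra_simps)
    ultimately show ?thesis by linarith
  qed
  then show ?thesis unfolding a_def[symmetric] using Q low up by linarith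
qed

lemma cs_psd:
  fixes P :: "real^'n^'n"
  assumes sP: "transpose P = P" and psd: "\<And>v. qf P v \<ge> 0"
  shows "(u \<bullet> (P *v s))^2 \<le> qf P u * qf P s"
proof -
  define q where "q = u \<bullet> (P *v s)"
  have E: "\<And>t. qf P u - 2 * t * q + t^2 * qf P s \<ge> 0"
    using qf_comb[OF sP, of u _ s] psd q_def by metis
  show ?thesis
  proof (cases "qf P s = 0")
    case True
    have "q = 0"
    proof (rule ccontr)
      assume "q \<noteq> 0"
      have "qf P u - 2 * ((qf P u + 1) / (2 * q)) * q + ((qf P u + 1) / (2 * q))^2 * qf P s \<ge> 0"
        by (rule E)
      moreover have "2 * ((qf P u + 1) / (2 * q)) * q = qf P u + 1" using \<open>q \<noteq> 0\<close> by simp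
      ultimately show False using True by simp
    qed
    then show ?thesis using True q_def by simp
  next
    case False
    hence pos: "qf P s > 0" using psd[of s] by simp
    have "qf P u - 2 * (q / qf P s) * q + (q / qf P s)^2 * qf P s \<ge> 0" by (rule E)
    hence "qf P u - q^2 / qf P s \<ge> 0" using scal2[OF pos, of "qf P u" q] by simp
    hence "q^2 / qf P s \<le> qf P u" by simp
    hence "q^2 \<le> qf P u * qf P s" using pos by (simp add: pos_divide_le_eq)
    then show ?thesis using q_def by simp
  qed
qed

lemma final_scalar:
  fixes \<eta> \<alpha> \<beta> \<gamma> :: real
  assumes "\<eta> \<ge> 1" "\<gamma> \<le> (1 + \<eta>) * \<beta> - \<eta> * \<alpha>" "\<beta> \<le> \<eta> * \<alpha>"
  shows "\<gamma> - 2 * \<beta> + \<alpha> \<le> (1 - 1/\<eta>)^2 * \<gamma>"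
proof -
  have H1: "(2*\<eta>-1) * \<gamma> \<le> (2*\<eta>-1) * ((1 + \<eta>) * \<beta> - \<eta> * \<alpha>)"
    using assms by (intro mult_left_mono) auto
  have H2: "(\<eta>-1) * (\<eta> * \<alpha> - \<beta>) \<ge> 0" using assms by auto
  have "\<eta>^2 * (\<gamma> - 2 * \<beta> + \<alpha>) \<le> (\<eta>-1)^2 * \<gamma>"
    using H1 H2 by (simp add: algebra_simps power2_eq_square)
  moreover have "(1 - 1/\<eta>)^2 = (\<eta>-1)^2 / \<eta>^2" using assms by (simp add: field_simps)
  moreover have "\<eta>^2 > 0" using assms by simp
  ultimately show ?thesis by (simp add: field_simps)
qed

lemma core:
  fixes A M :: "real^'n^'n"
  assumes sA: "transpose A = A" and sM: "transpose M = M" and eta: "\<eta> \<ge> 1"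
    and lo: "\<And>v. qf A v \<le> qf M v" and hi: "\<And>v. qf M v \<le> \<eta> * qf A v"
    and psdA: "\<And>v. qf A v \<ge> 0"
    and Az: "A *v z = M *v s"
  shows "qf A (z - s) \<le> (1 - 1/\<eta>)^2 * qf A z"
proof -
  define P where "P = M - A"
  have sP: "transpose P = P" unfolding P_def using sA sM
    by (simp add: vec_eq_iff transpose_def)
  have qP: "\<And>v. qf P v = qf M v - qf A v" by (simp add: P_def qf_def algebra_simps inner_diff_right)
  have psdP: "\<And>v. qf P v \<ge> 0" proof - fix v show "qf P v \<ge> 0" using qP[of v] lo[of v] by simp qed
  define u where "u = z - s"
  have Au: "A *v u = P *v s" by (simp add: u_def P_def algebra_simps Az)
  define X where "X = qf A u"
  have X: "X = u \<bullet> (P *v s)" by (simp add: X_def qf_def Au)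
  have X0: "X \<ge> 0" using psdA X_def by simp
  have cs: "X^2 \<le> qf P u * qf P s" using cs_psd[OF sP psdP, of u s] X by simp
  have "qf P u \<le> (\<eta> - 1) * X" using qP[of u] hi[of u] X_def by (simp add: algebra_simps)
  hence "qf P u * qf P s \<le> ((\<eta> - 1) * X) * qf P s" using psdP[of s] by (rule mult_right_mono)
  hence c2: "X * X \<le> X * ((\<eta> - 1) * qf P s)" using cs by (simp add: power2_eq_square mult_ac)
  have step1: "X \<le> (\<eta> - 1) * qf P s"
  proof (cases "X = 0")
    case True thus ?thesis using eta psdP[of s] by simp
  next
    case False thus ?thesis using c2 X0 by (simp add: mult_le_cancel_left)
  qed
  define \<alpha> where "\<alpha> = qf A s"
  define \<beta> where "\<beta> = qf M s"
  define \<gamma> where "\<gamma> = qf A z"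
  have zAs: "s \<bullet> (A *v z) = \<beta>" by (simp add: Az \<beta>_def qf_def)
  have Xg: "X = \<gamma> - 2 * \<beta> + \<alpha>"
    using qf_comb[OF sA, of z 1 s] sym_swap[OF sA, of z s] zAs
    by (simp add: X_def u_def \<alpha>_def \<gamma>_def)
  moreover have "qf P s = \<beta> - \<alpha>" using qP \<alpha>_def \<beta>_def by simp
  ultimately have "X \<le> (\<eta> - 1) * (\<beta> - \<alpha>)" using step1 by simp
  moreover have "(\<eta> - 1) * (\<beta> - \<alpha>) = (1 + \<eta>) * \<beta> - \<eta> * \<alpha> - 2 * \<beta> + \<alpha>"
    by (simp add: algebra_simps)
  ultimately have "\<gamma> \<le> (1 + \<eta>) * \<beta> - \<eta> * \<alpha>" using Xg by linarith
  moreover have "\<beta> \<le> \<eta> * \<alpha>" using hi \<alpha>_def \<beta>_def by simp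
  ultimately have "\<gamma> - 2 * \<beta> + \<alpha> \<le> (1 - 1/\<eta>)^2 * \<gamma>" using final_scalar eta by blast
  thus ?thesis using Xg X_def u_def \<gamma>_def by simp
qed

lemma mv_neg: "(M::real^'n^'m) *v (- v) = - (M *v v)"
  by (simp add: vec_eq_iff matrix_vector_mult_def sum_negf)

lemma sqrt_bound:
  fixes q d k :: real
  assumes "q \<le> k^2 * d" "d \<ge> 0" "k \<ge> 0"
  shows "sqrt (q / d) \<le> k"
proof (cases "d = 0")
  case True thus ?thesis using assms by simp
next
  case False
  hence "q / d \<le> k^2" using assms by (simp add: divide_le_eq)
  hence "sqrt (q / d) \<le> sqrt (k^2)" by (rule real_sqrt_le_mono)
  thus ?thesis using assms by simp
qed

lemma one_step:
  fixes A G :: "real^'n^'n" and b xt :: "real^'n"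
  assumes sA: "transpose A = A" and sG: "transpose G = G" and eta: "\<eta> \<ge> 1"
    and lo: "\<And>v. qf A v \<le> qf G v" and hi: "\<And>v. qf G v \<le> \<eta> * qf A v"
    and pdA: "\<And>v. v \<noteq> 0 \<Longrightarrow> qf A v > 0"
    and x1: "x1 = xt - matrix_inv G *v quad_grad A b xt"
  shows "theta A G (x1 - xt) \<le> 1 - 1/\<eta> \<and>
         newton_decr A b x1 \<le> (1 - 1/\<eta>) * newton_decr A b xt"
proof -
  have psdA: "\<And>v. qf A v \<ge> 0" using pdA by (metis order_refl less_imp_le qf_def inner_zero_left)
  have invA: "invertible A" using pdA by (rule pd_invertible)
  have invG: "invertible G" using pdA lo by (intro pd_invertible) (meson less_le_trans)
  define Ai where "Ai = matrix_inv A"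
  define Gi where "Gi = matrix_inv G"
  have A1: "A ** Ai = mat 1" "Ai ** A = mat 1" using inv_props[OF invA] Ai_def by auto
  have G1: "G ** Gi = mat 1" using inv_props[OF invG] Gi_def by auto
  have AAi: "\<And>w. A *v (Ai *v w) = w" by (simp add: matrix_vector_mul_assoc A1)
  have AiA: "\<And>w. Ai *v (A *v w) = w" by (simp add: matrix_vector_mul_assoc A1)
  define g where "g = quad_grad A b xt"
  define s where "s = x1 - xt"
  have Gs: "G *v s = - g"
    by (simp add: s_def x1 Gi_def[symmetric] g_def[symmetric] mv_neg matrix_vector_mul_assoc G1)
  define P where "P = G - A"
  have sP: "transpose P = P" unfolding P_def using sA sG
    by (simp add: vec_eq_iff transpose_def)
  define z where "z = Ai *v (G *v s)"
  have Az: "A *v z = G *v s" by (simp add: z_def AAi)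
  define y where "y = Ai *v (P *v s)"
  have yz: "y = z - s"
    by (simp add: y_def z_def P_def matrix_vector_mult_diff_rdistrib matrix_vector_mult_diff_distrib AiA)
  have Ay: "A *v y = P *v s" by (simp add: y_def AAi)
  have num: "qf (P ** Ai ** P) s = qf A y"
  proof -
    have "qf (P ** Ai ** P) s = s \<bullet> (P *v y)"
      by (simp add: qf_def y_def matrix_vector_mul_assoc[symmetric])
    also have "\<dots> = y \<bullet> (P *v s)" by (rule sym_swap[OF sP])
    finally show ?thesis by (simp add: qf_def Ay)
  qed
  have den: "qf (G ** Ai ** G) s = qf A z"
  proof -
    have "qf (G ** Ai ** G) s = s \<bullet> (G *v z)"
      by (simp add: qf_def z_def matrix_vector_mul_assoc[symmetric])
    also have "\<dots> = z \<bullet> (G *v s)" by (rule sym_swap[OF sG])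
    finally show ?thesis by (simp add: qf_def Az)
  qed
  have key: "qf A (z - s) \<le> (1 - 1/\<eta>)^2 * qf A z"
    by (rule core[OF sA sG eta lo hi psdA Az])
  have k0: "1 - 1/\<eta> \<ge> 0" using eta by (simp add: field_simps)
  have th: "theta A G (x1 - xt) \<le> 1 - 1/\<eta>"
    unfolding theta_def s_def[symmetric] Ai_def[symmetric] P_def[symmetric] num den
    using key yz psdA[of z] k0 by (intro sqrt_bound) auto
  have g1: "quad_grad A b x1 = - (P *v s)"
  proof -
    have "quad_grad A b x1 = A *v (xt + s) + b" by (simp add: quad_grad_def s_def)
    also have "\<dots> = g + A *v s" by (simp add: g_def quad_grad_def algebra_simps)
    also have "\<dots> = - (P *v s)" using Gs by (simp add: P_def algebra_simps)
    finally show ?thesis .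
  qed
  have n1: "qf Ai (quad_grad A b x1) = qf A y"
    using g1 by (simp add: qf_def y_def[symmetric] Ay[symmetric] mv_neg AiA inner_commute)
  have gz: "g = - (A *v z)" using Gs Az by simp
  have n0: "qf Ai g = qf A z"
    using gz by (simp add: qf_def mv_neg AiA inner_commute)
  have "newton_decr A b x1 = sqrt (qf A (z - s))"
    by (simp add: newton_decr_def Ai_def[symmetric] n1 yz)
  also have "\<dots> \<le> sqrt ((1 - 1/\<eta>)^2 * qf A z)" using key by (rule real_sqrt_le_mono)
  also have "\<dots> = (1 - 1/\<eta>) * sqrt (qf A z)" using k0 by (simp add: real_sqrt_mult)
  also have "\<dots> = (1 - 1/\<eta>) * newton_decr A b xt"
    by (simp add: newton_decr_def Ai_def[symmetric] g_def[symmetric] n0)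
  finally show ?thesis using th by simp
qed
lemma invariant:
  fixes A :: "real^'n^'n" and b :: "real^'n" and \<mu> L :: real
    and x :: "nat \<Rightarrow> real^'n" and G :: "nat \<Rightarrow> real^'n^'n"
  assumes mu: "0 < \<mu>" and muL: "\<mu> \<le> L"
    and sA: "transpose A = A"
    and lA: "\<And>v. \<mu> * (v \<bullet> v) \<le> v \<bullet> (A *v v)"
    and uA: "\<And>v. v \<bullet> (A *v v) \<le> L * (v \<bullet> v)"
    and sb: "sharpened_bfgs A b L x G"
  shows "transpose (G t) = G t \<and> (\<forall>v. qf A v \<le> qf (G t) v) \<and> (\<forall>v. qf (G t) v \<le> (L/\<mu>) * qf A v)"
proof (induction t)
  case 0
  have G0: "G 0 = L *\<^sub>R mat 1" using sb by (simp add: sharpened_bfgs_def)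
  have q0: "\<And>v. qf (G 0) v = L * (v \<bullet> v)" by (simp add: G0 qf_def scaleR_mv)
  have "\<And>v. qf (G 0) v \<le> (L/\<mu>) * qf A v"
  proof -
    fix v
    have "(L/\<mu>) * (\<mu> * (v \<bullet> v)) \<le> (L/\<mu>) * qf A v"
      using lA[of v] mu muL by (intro mult_left_mono) (auto simp: qf_def)
    thus "qf (G 0) v \<le> (L/\<mu>) * qf A v" using mu q0 by simp
  qed
  moreover have "transpose (G 0) = G 0" by (simp add: G0 transpose_scalar)
  moreover have "\<And>v. qf A v \<le> qf (G 0) v" using uA q0 by (simp add: qf_def)
  ultimately show ?case by blast
next
  case (Suc t)
  have eta: "L/\<mu> \<ge> 1" using mu muL by simp
  have pd: "\<And>v. v \<noteq> 0 \<Longrightarrow> qf A v > 0"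
  proof -
    fix v :: "real^'n" assume "v \<noteq> 0"
    hence "\<mu> * (v \<bullet> v) > 0" using mu by simp
    thus "qf A v > 0" using lA[of v] by (simp add: qf_def)
  qed
  obtain u where u: "G (Suc t) = BFGS A (BFGS A (G t) (x (Suc t) - x t)) u"
    using sb unfolding sharpened_bfgs_def Let_def by blast
  define Gb where "Gb = BFGS A (G t) (x (Suc t) - x t)"
  have IH: "transpose (G t) = G t" "\<And>v. qf A v \<le> qf (G t) v" "\<And>v. qf (G t) v \<le> (L/\<mu>) * qf A v"
    using Suc by auto
  have b1: "transpose Gb = Gb" unfolding Gb_def by (rule BFGS_sym[OF IH(1) sA])
  have b2: "\<And>v. qf A v \<le> qf Gb v" "\<And>v. qf Gb v \<le> (L/\<mu>) * qf A v"
    unfolding Gb_def using BFGS_bounds[OF IH(1) sA eta IH(2) IH(3) pd] by auto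
  have "transpose (G (Suc t)) = G (Suc t)" unfolding u Gb_def[symmetric] by (rule BFGS_sym[OF b1 sA])
  moreover have "\<forall>v. qf A v \<le> qf (G (Suc t)) v \<and> qf (G (Suc t)) v \<le> (L/\<mu>) * qf A v"
    unfolding u Gb_def[symmetric] using BFGS_bounds[OF b1 sA eta b2(1) b2(2) pd] by auto
  ultimately show ?case by blast
qed

theorem theorem1:
  fixes A :: "real^'n^'n" and b :: "real^'n" and \<mu> L :: real
    and x :: "nat \<Rightarrow> real^'n" and G :: "nat \<Rightarrow> real^'n^'n"
  assumes "0 < \<mu>" and "\<mu> \<le> L"
    and "transpose A = A"
    and "\<And>v. \<mu> * (v \<bullet> v) \<le> v \<bullet> (A *v v)"
    and "\<And>v. v \<bullet> (A *v v) \<le> L * (v \<bullet> v)"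
    and "sharpened_bfgs A b L x G"
  shows "\<forall>t. (\<forall>s\<le>t. quad_grad A b (x s) \<noteq> 0) \<longrightarrow>
           theta A (G t) (x (Suc t) - x t) \<le> 1 - \<mu> / L \<and>
           newton_decr A b (x t) \<le> (1 - \<mu> / L) ^ t * newton_decr A b (x 0)"
proof -
  note mu = assms(1) and muL = assms(2) and sA = assms(3) and lA = assms(4)
  have eta: "L/\<mu> \<ge> 1" using mu muL by simp
  have ke: "1 - 1/(L/\<mu>) = 1 - \<mu>/L" by simp
  have pd: "\<And>v. v \<noteq> 0 \<Longrightarrow> qf A v > 0"
  proof -
    fix v :: "real^'n" assume "v \<noteq> 0"
    hence "\<mu> * (v \<bullet> v) > 0" using mu by simp
    thus "qf A v > 0" using lA[of v] by (simp add: qf_def)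
  qed
  have step: "theta A (G t) (x (Suc t) - x t) \<le> 1 - \<mu>/L \<and>
      newton_decr A b (x (Suc t)) \<le> (1 - \<mu>/L) * newton_decr A b (x t)" for t
  proof -
    have I: "transpose (G t) = G t" "\<And>v. qf A v \<le> qf (G t) v" "\<And>v. qf (G t) v \<le> (L/\<mu>) * qf A v"
      using invariant[OF assms] by auto
    have x1: "x (Suc t) = x t - matrix_inv (G t) *v quad_grad A b (x t)"
      using assms(6) by (simp add: sharpened_bfgs_def)
    show ?thesis using one_step[OF sA I(1) eta I(2) I(3) pd x1] ke by simp
  qed
  have k0: "1 - \<mu>/L \<ge> 0" using mu muL by simp
  have nd: "newton_decr A b (x t) \<le> (1 - \<mu> / L) ^ t * newton_decr A b (x 0)" for t
  proof (induction t)
    case 0 thus ?case by simp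
  next
    case (Suc t)
    have "newton_decr A b (x (Suc t)) \<le> (1 - \<mu>/L) * newton_decr A b (x t)" using step by blast
    also have "\<dots> \<le> (1 - \<mu>/L) * ((1 - \<mu> / L) ^ t * newton_decr A b (x 0))"
      using Suc k0 by (rule mult_left_mono)
    finally show ?case by (simp add: mult_ac)
  qed
  show ?thesis using step nd by blast
qed

end
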